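(* Let $S=(P,L)$ be a slim dense near hexagon, let $Q_1,Q_2$ be two disjoint big quads of $S$, and let $Y$ be the subspace of $S$ generated by $Q_1\cup Q_2$. For $\{i,j\}=\{1,2\}$ and $x\in P\setminus Y$, let $x^{j}$ denote the unique point of $Q_j$ at distance $1$ from $x$, and for $y\in Q_i$ let $z_y$ denote the unique point of $Q_j$ at distance $1$ from $y$. Let $Q$ be a big quad of $S$ disjoint from $Y$, and let $x,y\in Q$ be non-collinear. Then $\big(d(z_{x^{1}},z_{y^{2}}),\,d(z_{x^{2}},z_{y^{1}})\big)$ equals $(2,3)$ or $(3,2)$.
   Context: A slim partial linear space has exactly $3$ points per line; $d$ is the distance in the collinearity graph. A near hexagon is a connected partial linear space of diameter $3$ with no point collinear with all others such that every point has a unique nearest point on every line. A quad is a convex subset of diameter $2$ in which no point is collinear with all others; the near hexagon is dense if any two points at distance $2$ lie in a quad. A quad $Q$ is big if every point of $S$ has distance at most $1$ from $Q$. A subspace is a set of points containing every line meeting it in at least two points; the subspace generated by a set is the intersection of all subspaces containing it. *)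

theory Defs
  imports Main
begin

definition collinear :: "'a set set \<Rightarrow> 'a \<Rightarrow> 'a \<Rightarrow> bool" where
  "collinear L x y \<longleftrightarrow> (\<exists>l\<in>L. x \<in> l \<and> y \<in> l)"

definition coll_rel :: "'a set set \<Rightarrow> ('a \<times> 'a) set" where
  "coll_rel L = {(x, y). x \<noteq> y \<and> collinear L x y}"

definition pdist :: "'a set set \<Rightarrow> 'a \<Rightarrow> 'a \<Rightarrow> nat" where
  "pdist L x y = (LEAST n. (x, y) \<in> coll_rel L ^^ n)"

definition partial_linear_space :: "'a set \<Rightarrow> 'a set set \<Rightarrow> bool" where
  "partial_linear_space P L \<longleftrightarrow>
     (\<forall>l\<in>L. l \<subseteq> P \<and> 2 \<le> card l \<and> finite l) \<and>
     (\<forall>x\<in>P. \<forall>y\<in>P. x \<noteq> y \<longrightarrow>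
        (\<forall>l1\<in>L. \<forall>l2\<in>L. x \<in> l1 \<and> y \<in> l1 \<and> x \<in> l2 \<and> y \<in> l2 \<longrightarrow> l1 = l2))"

definition slim :: "'a set set \<Rightarrow> bool" where
  "slim L \<longleftrightarrow> (\<forall>l\<in>L. finite l \<and> card l = 3)"

definition connected_geom :: "'a set \<Rightarrow> 'a set set \<Rightarrow> bool" where
  "connected_geom P L \<longleftrightarrow> (\<forall>x\<in>P. \<forall>y\<in>P. (x, y) \<in> (coll_rel L)\<^sup>*)"

definition near_hexagon :: "'a set \<Rightarrow> 'a set set \<Rightarrow> bool" where
  "near_hexagon P L \<longleftrightarrow>
     partial_linear_space P L \<and> connected_geom P L \<and>
     (\<forall>x\<in>P. \<forall>y\<in>P. pdist L x y \<le> 3) \<and>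
     (\<exists>x\<in>P. \<exists>y\<in>P. pdist L x y = 3) \<and>
     (\<forall>x\<in>P. \<exists>y\<in>P. y \<noteq> x \<and> \<not> collinear L x y) \<and>
     (\<forall>x\<in>P. \<forall>l\<in>L. \<exists>!y. y \<in> l \<and> (\<forall>z\<in>l. z \<noteq> y \<longrightarrow> pdist L x y < pdist L x z))"

definition convex_set :: "'a set \<Rightarrow> 'a set set \<Rightarrow> 'a set \<Rightarrow> bool" where
  "convex_set P L X \<longleftrightarrow> X \<subseteq> P \<and>
     (\<forall>x\<in>X. \<forall>y\<in>X. \<forall>z\<in>P. pdist L x z + pdist L z y = pdist L x y \<longrightarrow> z \<in> X)"

definition quad :: "'a set \<Rightarrow> 'a set set \<Rightarrow> 'a set \<Rightarrow> bool" where
  "quad P L X \<longleftrightarrow> convex_set P L X \<and>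
     (\<forall>x\<in>X. \<forall>y\<in>X. pdist L x y \<le> 2) \<and>
     (\<exists>x\<in>X. \<exists>y\<in>X. pdist L x y = 2) \<and>
     (\<forall>x\<in>X. \<exists>y\<in>X. y \<noteq> x \<and> \<not> collinear L x y)"

definition dense_nh :: "'a set \<Rightarrow> 'a set set \<Rightarrow> bool" where
  "dense_nh P L \<longleftrightarrow> near_hexagon P L \<and>
     (\<forall>x\<in>P. \<forall>y\<in>P. pdist L x y = 2 \<longrightarrow> (\<exists>Q. quad P L Q \<and> x \<in> Q \<and> y \<in> Q))"

definition big_quad :: "'a set \<Rightarrow> 'a set set \<Rightarrow> 'a set \<Rightarrow> bool" where
  "big_quad P L Q \<longleftrightarrow> quad P L Q \<and> (\<forall>x\<in>P. \<exists>q\<in>Q. pdist L x q \<le> 1)"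

definition subspace :: "'a set \<Rightarrow> 'a set set \<Rightarrow> 'a set \<Rightarrow> bool" where
  "subspace P L X \<longleftrightarrow> X \<subseteq> P \<and>
     (\<forall>l\<in>L. (\<exists>a\<in>l. \<exists>b\<in>l. a \<noteq> b \<and> a \<in> X \<and> b \<in> X) \<longrightarrow> l \<subseteq> X)"

definition generated_subspace :: "'a set \<Rightarrow> 'a set set \<Rightarrow> 'a set \<Rightarrow> 'a set" where
  "generated_subspace P L A = \<Inter>{X. subspace P L X \<and> A \<subseteq> X}"

definition proj_pt :: "'a set set \<Rightarrow> 'a set \<Rightarrow> 'a \<Rightarrow> 'a" where
  "proj_pt L X x = (THE u. u \<in> X \<and> pdist L x u = 1)"

end

theory Submission
  imports Defs
begin

lemma relpow_sym:
  assumes "sym R" shows "(x,y) \<in> R ^^ n \<Longrightarrow> (y,x) \<in> R ^^ n"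
proof (induction n arbitrary: x y)
  case 0 then show ?case by simp
next
  case (Suc n)
  then obtain z where "(x,z) \<in> R" "(z,y) \<in> R ^^ n" using relpow_Suc_D2 by metis
  then have "(y,z) \<in> R ^^ n" "(z,x) \<in> R" using Suc.IH assms by (auto dest: symD)
  then show ?case using relpow_Suc_I by metis
qed

locale nh =
  fixes P :: "'a set" and L :: "'a set set"
  assumes slimL: "slim L" and dense: "dense_nh P L"
begin

abbreviation d where "d \<equiv> pdist L"
definition adj where "adj x y \<longleftrightarrow> x \<noteq> y \<and> collinear L x y"

lemma nhex: "near_hexagon P L" using dense by (simp add: dense_nh_def)
lemma pls: "partial_linear_space P L" using nhex by (simp add: near_hexagon_def)
lemma line_sub: "l \<in> L \<Longrightarrow> l \<subseteq> P" using pls by (simp add: partial_linear_space_def)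
lemma line_card: "l \<in> L \<Longrightarrow> card l = 3" using slimL by (simp add: slim_def)
lemma line_unique: assumes "x \<noteq> y" "l1 \<in> L" "l2 \<in> L" "x \<in> l1" "y \<in> l1" "x \<in> l2" "y \<in> l2"
  shows "l1 = l2"
proof -
  have xy: "x \<in> P" "y \<in> P" using line_sub assms by auto
  have H: "\<forall>x\<in>P. \<forall>y\<in>P. x \<noteq> y \<longrightarrow> (\<forall>l1\<in>L. \<forall>l2\<in>L. x \<in> l1 \<and> y \<in> l1 \<and> x \<in> l2 \<and> y \<in> l2 \<longrightarrow> l1 = l2)"
    using pls by (simp add: partial_linear_space_def)
  show ?thesis using H xy assms by blast
qed
lemma conn: "x \<in> P \<Longrightarrow> y \<in> P \<Longrightarrow> (x,y) \<in> (coll_rel L)\<^sup>*"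
  using nhex by (simp add: near_hexagon_def connected_geom_def)
lemma diam3: "x \<in> P \<Longrightarrow> y \<in> P \<Longrightarrow> d x y \<le> 3"
  using nhex by (simp add: near_hexagon_def)
lemma nearest0: assumes "x \<in> P" "l \<in> L" shows "\<exists>y\<in>l. \<forall>z\<in>l. z \<noteq> y \<longrightarrow> d x y < d x z"
proof -
  have H: "\<forall>x\<in>P. \<forall>l\<in>L. \<exists>!y. y \<in> l \<and> (\<forall>z\<in>l. z \<noteq> y \<longrightarrow> d x y < d x z)"
    using nhex unfolding near_hexagon_def by (elim conjE) assumption
  show ?thesis using ex1_implies_ex[OF H[rule_format, OF assms]] by blast
qed

lemma line3: assumes "l \<in> L" "a \<in> l" "b \<in> l" "a \<noteq> b"
  shows "\<exists>c. c \<in> l \<and> c \<noteq> a \<and> c \<noteq> b \<and> l = {a,b,c}"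
proof -
  have "card l = 3" using line_card[OF assms(1)] .
  then obtain x y z where l: "l = {x,y,z}" "x \<noteq> y" "y \<noteq> z" "x \<noteq> z"
    unfolding card_3_iff by blast
  have "a \<in> {x,y,z}" "b \<in> {x,y,z}" using l assms by auto
  then show ?thesis using l assms(4) by (simp, elim disjE, simp_all, blast+)
qed

lemma sym_coll: "sym (coll_rel L)"
  by (auto simp: sym_def coll_rel_def collinear_def)

lemma dist_path: "x \<in> P \<Longrightarrow> y \<in> P \<Longrightarrow> (x,y) \<in> coll_rel L ^^ d x y"
proof -
  assume "x \<in> P" "y \<in> P"
  from conn[OF this] obtain n where "(x,y) \<in> coll_rel L ^^ n" using rtrancl_power by blast
  then show ?thesis unfolding pdist_def by (rule LeastI)
qed

lemma dist_le: "(x,y) \<in> coll_rel L ^^ n \<Longrightarrow> d x y \<le> n"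
  unfolding pdist_def by (rule Least_le)

lemma d_refl[simp]: "d x x = 0"
  using dist_le[of x x 0] by simp

lemma d_sym: "x \<in> P \<Longrightarrow> y \<in> P \<Longrightarrow> d x y = d y x"
  using dist_path dist_le relpow_sym[OF sym_coll] by (metis le_antisym)

lemma d0: "x \<in> P \<Longrightarrow> y \<in> P \<Longrightarrow> d x y = 0 \<longleftrightarrow> x = y"
  using dist_path by fastforce

lemma d_tri: "x \<in> P \<Longrightarrow> y \<in> P \<Longrightarrow> z \<in> P \<Longrightarrow> d x z \<le> d x y + d y z"
proof -
  assume a: "x \<in> P" "y \<in> P" "z \<in> P"
  have "(x,z) \<in> coll_rel L ^^ (d x y + d y z)"
    using dist_path[OF a(1,2)] dist_path[OF a(2,3)] by (auto simp: relpow_add)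
  then show ?thesis by (rule dist_le)
qed

lemma adj_P: "adj x y \<Longrightarrow> x \<in> P \<and> y \<in> P"
  using line_sub by (auto simp: adj_def collinear_def)

lemma d1: "x \<in> P \<Longrightarrow> y \<in> P \<Longrightarrow> d x y = 1 \<longleftrightarrow> adj x y"
proof
  assume a: "x \<in> P" "y \<in> P" "d x y = 1"
  then have "(x,y) \<in> coll_rel L" using dist_path[OF a(1,2)] by simp
  then show "adj x y" by (simp add: coll_rel_def adj_def)
next
  assume a: "x \<in> P" "y \<in> P" "adj x y"
  then have "(x,y) \<in> coll_rel L ^^ 1" by (simp add: coll_rel_def adj_def)
  then have "d x y \<le> 1" by (rule dist_le)
  moreover have "d x y \<noteq> 0" using d0 a adj_def by auto
  ultimately show "d x y = 1" by simp
qed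

lemma dstep: assumes "x \<in> P" "y \<in> P" "d x y = Suc n"
  shows "\<exists>z. adj x z \<and> d z y = n"
proof -
  have "(x,y) \<in> coll_rel L ^^ Suc n" using dist_path assms by metis
  then obtain z where z: "(x,z) \<in> coll_rel L" "(z,y) \<in> coll_rel L ^^ n" using relpow_Suc_D2 by metis
  then have az: "adj x z" by (simp add: coll_rel_def adj_def)
  then have zP: "z \<in> P" using adj_P by auto
  have "d z y \<le> n" using z dist_le by auto
  moreover have "d x y \<le> d x z + d z y" using d_tri[of x z y] assms zP by auto
  moreover have "d x z = 1" using d1 az assms zP by auto
  ultimately show ?thesis using az assms by auto
qed

lemma adj_sym: "adj x y \<Longrightarrow> adj y x" by (auto simp: adj_def collinear_def)

lemma adj_line: "adj x y \<Longrightarrow> \<exists>l\<in>L. x \<in> l \<and> y \<in> l" by (auto simp: adj_def collinear_def)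

lemma line_adj: "l \<in> L \<Longrightarrow> x \<in> l \<Longrightarrow> y \<in> l \<Longrightarrow> x \<noteq> y \<Longrightarrow> adj x y"
  by (auto simp: adj_def collinear_def)

lemma LP: assumes "x \<in> P" "l \<in> L"
  shows "\<exists>y\<in>l. \<forall>z\<in>l. z \<noteq> y \<longrightarrow> d x z = d x y + 1"
proof -
  obtain y where y: "y \<in> l" "\<forall>z\<in>l. z \<noteq> y \<longrightarrow> d x y < d x z" using nearest0 assms by blast
  have "\<forall>z\<in>l. z \<noteq> y \<longrightarrow> d x z = d x y + 1"
  proof (intro ballI impI)
    fix z assume z: "z \<in> l" "z \<noteq> y"
    have "z \<in> P" "y \<in> P" using z y line_sub assms by auto
    then have "d x z \<le> d x y + d y z" using d_tri assms by auto
    moreover have "d y z = 1" using d1 line_adj[OF assms(2) y(1) z(1)] z \<open>z \<in> P\<close> \<open>y \<in> P\<close> by auto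
    ultimately show "d x z = d x y + 1" using y z by fastforce
  qed
  then show ?thesis using y by blast
qed

lemma triangle: assumes "adj a b" "adj b c" "adj a c"
  shows "\<exists>l\<in>L. a \<in> l \<and> b \<in> l \<and> c \<in> l"
proof -
  obtain l where l: "l \<in> L" "a \<in> l" "b \<in> l" using adj_line assms by blast
  have cP: "c \<in> P" "a \<in> P" "b \<in> P" using adj_P assms by auto
  obtain y where y: "y \<in> l" "\<forall>z\<in>l. z \<noteq> y \<longrightarrow> d c z = d c y + 1" using LP[OF cP(1) l(1)] by blast
  have ca: "d c a = 1" "d c b = 1" using d1 cP assms adj_sym by auto
  have "a \<noteq> b" using assms adj_def by auto
  have "y = a \<or> y = b \<or> (y \<noteq> a \<and> y \<noteq> b)" by blast
  then have "d c y = 0" using y ca l \<open>a \<noteq> b\<close> by force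
  then have "c = y" using d0 cP y line_sub l by blast
  then show ?thesis using l y by blast
qed


lemma adj_neq: "adj x y \<Longrightarrow> x \<noteq> y" by (simp add: adj_def)

lemma d1': "adj x y \<Longrightarrow> d x y = 1" using d1 adj_P by blast

lemma dle1: "x \<in> P \<Longrightarrow> y \<in> P \<Longrightarrow> d x y \<le> 1 \<Longrightarrow> x \<noteq> y \<Longrightarrow> adj x y"
  using d1 d0 by (metis le_neq_implies_less less_one)

lemma adj_tri2: "adj x y \<Longrightarrow> z \<in> P \<Longrightarrow> d x z \<le> d y z + 1"
  using d_tri[of x y z] adj_P d1' by fastforce

lemma on_line: assumes "l \<in> L" "a \<in> l" "b \<in> l" "a \<noteq> b" "adj a c" "adj b c" shows "c \<in> l"
proof -
  have "adj a b" using line_adj assms by auto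
  then obtain l' where l': "l' \<in> L" "a \<in> l'" "b \<in> l'" "c \<in> l'" using triangle assms by blast
  have "l' = l" using line_unique[OF assms(4) l'(1) assms(1) l'(2,3) assms(2,3)] .
  then show ?thesis using l' by simp
qed

lemma qP: "quad P L X \<Longrightarrow> X \<subseteq> P" by (simp add: quad_def convex_set_def)
lemma qconv: "quad P L X \<Longrightarrow> x \<in> X \<Longrightarrow> y \<in> X \<Longrightarrow> z \<in> P \<Longrightarrow> d x z + d z y = d x y \<Longrightarrow> z \<in> X"
  unfolding quad_def convex_set_def by blast
lemma qdiam: "quad P L X \<Longrightarrow> x \<in> X \<Longrightarrow> y \<in> X \<Longrightarrow> d x y \<le> 2"
  unfolding quad_def by blast
lemma qfar: assumes "quad P L X" "x \<in> X" shows "\<exists>y\<in>X. d x y = 2"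
proof -
  obtain y where y: "y \<in> X" "y \<noteq> x" "\<not> collinear L x y" using assms unfolding quad_def by blast
  have P: "x \<in> P" "y \<in> P" using qP assms y by auto
  have "d x y \<noteq> 0" "d x y \<noteq> 1" using y d0 d1 P adj_def by auto
  moreover have "d x y \<le> 2" using qdiam assms y by blast
  ultimately show ?thesis using y by (intro bexI[of _ y]) auto
qed
lemma qcommon: assumes "quad P L X" "x \<in> X" "y \<in> X" "d x y = 2" "adj x z" "adj z y" shows "z \<in> X"
proof -
  have "d x z = 1" "d z y = 1" using assms d1' by auto
  then show ?thesis using qconv[OF assms(1-3)] assms adj_P by auto
qed
lemma qnadj: assumes "quad P L X" "x \<in> X" "y \<in> X" "x \<noteq> y" "\<not> adj x y" shows "d x y = 2"
proof -
  have P: "x \<in> P" "y \<in> P" using qP assms by auto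
  have "d x y \<noteq> 0" "d x y \<noteq> 1" using d0 d1 P assms by auto
  moreover have "d x y \<le> 2" using qdiam assms by blast
  ultimately show ?thesis by auto
qed

lemma bignb: assumes "big_quad P L X" "z \<in> P" "z \<notin> X" shows "\<exists>q\<in>X. adj z q"
proof -
  obtain q where q: "q \<in> X" "d z q \<le> 1" using assms unfolding big_quad_def by blast
  have "q \<in> P" using q assms qP unfolding big_quad_def by blast
  then show ?thesis using q assms dle1 by blast
qed

lemma subsp_line: "subspace P L Z \<Longrightarrow> l \<in> L \<Longrightarrow> a \<in> l \<Longrightarrow> b \<in> l \<Longrightarrow> a \<noteq> b \<Longrightarrow> a \<in> Z \<Longrightarrow> b \<in> Z \<Longrightarrow> l \<subseteq> Z"
  unfolding subspace_def by blast

lemma uniq_sub: assumes "quad P L X" "subspace P L Z" "X \<subseteq> Z" "z \<in> P" "z \<notin> Z"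
  "q1 \<in> X" "q2 \<in> X" "adj z q1" "adj z q2" shows "q1 = q2"
proof (rule ccontr)
  assume ne: "q1 \<noteq> q2"
  show False
  proof (cases "adj q1 q2")
    case True
    then obtain l where l: "l \<in> L" "z \<in> l" "q1 \<in> l" "q2 \<in> l" using triangle assms adj_sym by metis
    then have "l \<subseteq> Z" using subsp_line[OF assms(2) l(1,3,4) ne] assms by auto
    then show False using l assms by auto
  next
    case False
    then have "d q1 q2 = 2" using qnadj assms ne by auto
    moreover have "d q1 z = 1" "d z q2 = 1" using assms d1' adj_sym by auto
    ultimately have "z \<in> X" using qconv[OF assms(1,6,7,4)] by auto
    then show False using assms by auto
  qed
qed

lemma DF: assumes X: "quad P L X" and z: "z \<in> P" "z \<notin> X" and r: "r \<in> X" "adj z r"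
  and U: "\<And>q. q \<in> X \<Longrightarrow> adj z q \<Longrightarrow> q = r" and q: "q \<in> X"
  shows "d z q = d r q + 1"
proof -
  have P: "r \<in> P" "q \<in> P" using qP X r q by auto
  have drq: "d r q \<le> 2" using qdiam X r q by blast
  have zr: "d z r = 1" using d1' r by auto
  have up: "d z q \<le> d r q + 1" using d_tri[of z r q] P z zr by auto
  have n0: "d z q \<noteq> 0" using d0 z P q by auto
  have n1: "d z q = 1 \<Longrightarrow> q = r" using U q d1 z P by auto
  consider "d r q = 0" | "d r q = 1" | "d r q = 2" using drq by linarith
  then show ?thesis
  proof cases
    case 1 then have "q = r" using d0 P by auto
    then show ?thesis using zr by simp
  next
    case 2 then have "q \<noteq> r" by auto
    then show ?thesis using up n0 n1 2 by fastforce
  next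
    case 3 then have qr: "q \<noteq> r" by auto
    have ne2: "d z q \<noteq> 2"
    proof
      assume zq: "d z q = 2"
      obtain l where l: "l \<in> L" "z \<in> l" "r \<in> l" using adj_line r by blast
      obtain r' where r': "r' \<in> l" "r' \<noteq> z" "r' \<noteq> r" "l = {z, r, r'}" using line3 l adj_neq r by metis
      obtain y where y: "y \<in> l" "\<forall>w\<in>l. w \<noteq> y \<longrightarrow> d q w = d q y + 1" using LP P l by blast
      have qz: "d q z = 2" "d q r = 2" using zq 3 d_sym P z by auto
      have "y \<noteq> z" using y qz l adj_neq r by force
      moreover have "y \<noteq> r" using y qz l adj_neq r by force
      ultimately have yr': "y = r'" using y r' by auto
      have "d q r' = 1" using y yr' qz l r' by force
      have r'P: "r' \<in> P" using line_sub l r' by auto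
      have "d r r' = 1" using d1 line_adj[OF l(1) l(3) r'(1)] r' P r'P by auto
      moreover have "d r' q = 1" using \<open>d q r' = 1\<close> d_sym P r'P by auto
      ultimately have "r' \<in> X" using qconv[OF X r(1) q r'P] 3 by auto
      moreover have "adj z r'" using line_adj l r' by auto
      ultimately show False using U r' by auto
    qed
    have "d z q \<noteq> 1" using n1 qr by auto
    then show ?thesis using up n0 ne2 3 by linarith
  qed
qed

end


locale tq = nh +
  fixes X Y Q :: "'a set"
  assumes X: "big_quad P L X" and Qb: "big_quad P L Q" and XY: "X \<subseteq> Y" and Ysub: "subspace P L Y"
    and QY: "Q \<inter> Y = {}"
begin

lemma Xq: "quad P L X" using X by (simp add: big_quad_def)
lemma Qq: "quad P L Q" using Qb by (simp add: big_quad_def)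
lemma XP: "X \<subseteq> P" using qP Xq .
lemma QP: "Q \<subseteq> P" using qP Qq .
lemma YP: "Y \<subseteq> P" using Ysub by (simp add: subspace_def)
lemma QX: "q \<in> Q \<Longrightarrow> q \<notin> X" using QY XY by auto

lemma uniq_all: assumes z: "z \<in> P" "z \<notin> X" and q: "q1 \<in> X" "q2 \<in> X" "adj z q1" "adj z q2"
  shows "q1 = q2"
proof (cases "z \<in> Y")
  case False show ?thesis using uniq_sub[OF Xq Ysub XY z(1) False q] by simp
next
  case zY: True
  show ?thesis
  proof (rule ccontr)
    assume ne: "q1 \<noteq> q2"
    have qP: "q1 \<in> P" "q2 \<in> P" using q XP by auto
    have aq: "adj q1 q2"
    proof (rule ccontr)
      assume "\<not> adj q1 q2"
      then have "d q1 q2 = 2" using qnadj Xq q ne by auto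
      moreover have "d q1 z = 1" "d z q2 = 1" using q d1' adj_sym by auto
      ultimately have "z \<in> X" using qconv[OF Xq q(1,2) z(1)] by auto
      then show False using z by auto
    qed
    obtain l where l: "l \<in> L" "z \<in> l" "q1 \<in> l" "q2 \<in> l" using triangle q aq adj_sym by metis
    obtain c0 where c0: "c0 \<in> l" "c0 \<noteq> q1" "c0 \<noteq> q2" "l = {q1,q2,c0}" using line3 l ne by metis
    have lz: "l = {q1,q2,z}" using c0 l z q by auto
    have lY: "l \<subseteq> Y" using lz zY q XY by auto
    have "z \<notin> Q" using zY QY by auto
    then obtain r where r: "r \<in> Q" "adj z r" using bignb[OF Qb z(1)] by blast
    have rY: "r \<notin> Y" using r QY by auto
    have rP: "r \<in> P" using r QP by auto
    have rX: "r \<notin> X" using rY XY by auto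
    obtain c where c: "c \<in> X" "adj r c" using bignb[OF X rP rX] by blast
    have Ur: "\<And>q. q \<in> X \<Longrightarrow> adj r q \<Longrightarrow> q = c" using uniq_sub[OF Xq Ysub XY rP rY] c by blast
    have dfr: "\<And>q. q \<in> X \<Longrightarrow> d r q = d c q + 1" using DF[OF Xq rP rX c Ur] .
    have "d r q1 \<le> d z q1 + 1" using adj_tri2[OF adj_sym[OF r(2)]] qP by auto
    then have c1: "d c q1 \<le> 1" using dfr q d1' by fastforce
    have "d r q2 \<le> d z q2 + 1" using adj_tri2[OF adj_sym[OF r(2)]] qP by auto
    then have c2: "d c q2 \<le> 1" using dfr q d1' by fastforce
    have cP: "c \<in> P" using c XP by auto
    have cq1: "c \<noteq> q1"
    proof
      assume "c = q1"
      then have "adj r q1" using c by simp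
      then obtain l' where l': "l' \<in> L" "r \<in> l'" "z \<in> l'" "q1 \<in> l'" using triangle r q adj_sym by metis
      have "l' = l" using line_unique[OF _ l'(1) l(1) l'(3) l'(4) l(2) l(3)] z q by auto
      then show False using l' lY rY by auto
    qed
    have cq2: "c \<noteq> q2"
    proof
      assume "c = q2"
      then have "adj r q2" using c by simp
      then obtain l' where l': "l' \<in> L" "r \<in> l'" "z \<in> l'" "q2 \<in> l'" using triangle r q adj_sym by metis
      have "l' = l" using line_unique[OF _ l'(1) l(1) l'(3) l'(4) l(2) l(4)] z q by auto
      then show False using l' lY rY by auto
    qed
    have a1: "adj c q1" using dle1 cP qP c1 cq1 by auto
    have a2: "adj c q2" using dle1 cP qP c2 cq2 by auto
    obtain l' where l': "l' \<in> L" "c \<in> l'" "q1 \<in> l'" "q2 \<in> l'" using triangle[OF a1 aq a2] by blast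
    have "l' = l" using line_unique[OF ne l'(1) l(1) l'(3) l'(4) l(3) l(4)] .
    then have "c \<in> {q1,q2,z}" using l' lz by auto
    then show False using cq1 cq2 c z by auto
  qed
qed


lemma X_sub: assumes "l \<in> L" "a \<in> l" "b \<in> l" "a \<noteq> b" "a \<in> X" "b \<in> X" shows "l \<subseteq> X"
proof
  fix z assume z: "z \<in> l"
  show "z \<in> X"
  proof (rule ccontr)
    assume zX: "z \<notin> X"
    have "z \<in> P" using z line_sub assms by auto
    moreover have "z \<noteq> a" "z \<noteq> b" using zX assms by auto
    ultimately show False using uniq_all[OF _ zX assms(5,6)] line_adj[OF assms(1) z] assms by auto
  qed
qed

abbreviation pX where "pX z \<equiv> proj_pt L X z"

lemma pr_spec: assumes "z \<in> P" "z \<notin> X" shows "pX z \<in> X \<and> adj z (pX z)"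
proof -
  obtain q where q: "q \<in> X" "adj z q" using bignb[OF X assms] by blast
  have qP: "q \<in> P" using q XP by auto
  have "\<And>u. u \<in> X \<and> d z u = 1 \<Longrightarrow> u = q" using uniq_all[OF assms] q d1 assms XP by blast
  moreover have "q \<in> X \<and> d z q = 1" using q d1' by auto
  ultimately have "pX z = q" unfolding proj_pt_def by (rule the_equality[rotated])
  then show ?thesis using q by simp
qed

lemma pr_eq: "z \<in> P \<Longrightarrow> z \<notin> X \<Longrightarrow> q \<in> X \<Longrightarrow> adj z q \<Longrightarrow> pX z = q"
  using pr_spec uniq_all by metis

lemma DFX: assumes "z \<in> P" "z \<notin> X" "q \<in> X" shows "d z q = d (pX z) q + 1"
  using DF[OF Xq assms(1,2) _ _ _ assms(3)] pr_spec[OF assms(1,2)] uniq_all[OF assms(1,2)] by blast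

lemma contr: assumes "z \<in> P" "z \<notin> X" "z' \<in> P" "z' \<notin> X" shows "d (pX z) (pX z') \<le> d z z'"
proof -
  have s: "pX z' \<in> X" "adj z' (pX z')" using pr_spec assms by auto
  have "d z (pX z') = d (pX z) (pX z') + 1" using DFX assms s by auto
  moreover have "d z (pX z') \<le> d z z' + d z' (pX z')" using d_tri assms s XP by auto
  moreover have "d z' (pX z') = 1" using s d1' by auto
  ultimately show ?thesis by linarith
qed

lemma surj: assumes "u \<in> X" shows "\<exists>q\<in>Q. pX q = u"
proof -
  have "u \<notin> Q" using assms QX by auto
  then obtain q where q: "q \<in> Q" "adj u q" using bignb[OF Qb] assms XP by blast
  then have "pX q = u" using pr_eq QP QX assms adj_sym by blast
  then show ?thesis using q by blast
qed

lemma inj: assumes r: "r \<in> Q" "r' \<in> Q" and eq: "pX r = pX r'" shows "r = r'"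
proof (rule ccontr)
  assume ne: "r \<noteq> r'"
  have rP: "r \<in> P" "r' \<in> P" "r \<notin> X" "r' \<notin> X" using r QP QX by auto
  define u where "u = pX r"
  have u: "u \<in> X" "adj r u" "adj r' u" using pr_spec[of r] pr_spec[of r'] rP eq unfolding u_def by auto
  have uP: "u \<in> P" using u XP by auto
  have uQ: "u \<notin> Q" using u QX by auto
  have ar: "adj r r'"
  proof (rule ccontr)
    assume "\<not> adj r r'"
    then have "d r r' = 2" using qnadj Qq r ne by auto
    moreover have "d r u = 1" "d u r' = 1" using u d1' adj_sym by auto
    ultimately have "u \<in> Q" using qconv[OF Qq r uP] by auto
    then show False using uQ by auto
  qed
  obtain l where l: "l \<in> L" "r \<in> l" "r' \<in> l" "u \<in> l" using triangle[OF ar u(3)] u adj_sym by metis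
  obtain c0 where c0: "c0 \<in> l" "c0 \<noteq> r" "c0 \<noteq> r'" "l = {r,r',c0}" using line3 l ne by metis
  have lz: "l = {r,r',u}" using c0 l u adj_neq by auto
  have close: "\<And>q. q \<in> Q \<Longrightarrow> d q u \<le> 2"
  proof -
    fix q assume q: "q \<in> Q"
    have qP: "q \<in> P" using q QP by auto
    obtain y where y: "y \<in> l" "\<forall>w\<in>l. w \<noteq> y \<longrightarrow> d q w = d q y + 1" using LP[OF qP l(1)] by blast
    have b: "d q r \<le> 2" "d q r' \<le> 2" using qdiam Qq q r by auto
    have "y = r \<or> y = r' \<or> y = u" using y lz by auto
    then show "d q u \<le> 2" using y b l ne u adj_neq lz by fastforce
  qed
  obtain s where s: "s \<in> X" "d u s = 2" using qfar Xq u by blast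
  obtain q where q: "q \<in> Q" "pX q = s" using surj s by blast
  have "d q u = d s u + 1" using DFX[of q u] q QP QX u by auto
  moreover have "d s u = 2" using s d_sym uP XP by auto
  ultimately show False using close[OF q(1)] by auto
qed

end

locale cfg = nh +
  fixes Q1 Q2 Q :: "'a set"
  assumes Q1: "big_quad P L Q1" and Q2: "big_quad P L Q2" and disj: "Q1 \<inter> Q2 = {}"
    and Qb: "big_quad P L Q" and QY: "Q \<inter> generated_subspace P L (Q1 \<union> Q2) = {}"
begin

abbreviation Y where "Y \<equiv> generated_subspace P L (Q1 \<union> Q2)"

lemma P_sub: "subspace P L P" using line_sub by (auto simp: subspace_def)

lemma Y_sub: "subspace P L Y"
proof -
  let ?F = "{X. subspace P L X \<and> Q1 \<union> Q2 \<subseteq> X}"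
  have Yd: "Y = \<Inter>?F" unfolding generated_subspace_def by simp
  have "P \<in> ?F" using P_sub Q1 Q2 qP unfolding big_quad_def by blast
  then have "Y \<subseteq> P" using Yd by blast
  moreover have "\<forall>l\<in>L. (\<exists>a\<in>l. \<exists>b\<in>l. a \<noteq> b \<and> a \<in> Y \<and> b \<in> Y) \<longrightarrow> l \<subseteq> Y"
  proof (intro ballI impI)
    fix l assume l: "l \<in> L" and "\<exists>a\<in>l. \<exists>b\<in>l. a \<noteq> b \<and> a \<in> Y \<and> b \<in> Y"
    then obtain a b where ab: "a \<in> l" "b \<in> l" "a \<noteq> b" "a \<in> Y" "b \<in> Y" by blast
    show "l \<subseteq> Y" unfolding Yd
    proof
      fix z assume z: "z \<in> l"
      show "z \<in> \<Inter>?F"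
      proof
        fix X assume X: "X \<in> ?F"
        then have "a \<in> X" "b \<in> X" using ab Yd by auto
        then show "z \<in> X" using subsp_line[of X l a b] X l ab z by auto
      qed
    qed
  qed
  ultimately show ?thesis unfolding subspace_def by blast
qed

lemma QinY: "Q1 \<union> Q2 \<subseteq> Y" unfolding generated_subspace_def by blast

end

sublocale cfg \<subseteq> T1: tq P L Q1 "generated_subspace P L (Q1 \<union> Q2)" Q
  by unfold_locales (use Q1 Qb QinY Y_sub QY in auto)
sublocale cfg \<subseteq> T2: tq P L Q2 "generated_subspace P L (Q1 \<union> Q2)" Q
  by unfold_locales (use Q2 Qb QinY Y_sub QY in auto)

context cfg begin

abbreviation p1 where "p1 \<equiv> proj_pt L Q1"
abbreviation p2 where "p2 \<equiv> proj_pt L Q2"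

lemma Q1P: "Q1 \<subseteq> P" using T1.XP .
lemma Q2P: "Q2 \<subseteq> P" using T2.XP .
lemma inP1[simp]: "u \<in> Q1 \<Longrightarrow> u \<in> P" using Q1P by auto
lemma inP2[simp]: "u \<in> Q2 \<Longrightarrow> u \<in> P" using Q2P by auto
lemma n12[simp]: "u \<in> Q1 \<Longrightarrow> u \<notin> Q2" using disj by auto
lemma n21[simp]: "u \<in> Q2 \<Longrightarrow> u \<notin> Q1" using disj by auto

lemma back1: "u \<in> Q1 \<Longrightarrow> p1 (p2 u) = u"
  using T2.pr_spec[of u] T1.pr_eq[of "p2 u" u] Q1P Q2P n12 n21 adj_sym by auto
lemma back2: "v \<in> Q2 \<Longrightarrow> p2 (p1 v) = v"
  using T1.pr_spec[of v] T2.pr_eq[of "p1 v" v] Q1P Q2P n12 n21 adj_sym by auto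
lemma p2Q: "u \<in> Q1 \<Longrightarrow> p2 u \<in> Q2" using T2.pr_spec Q1P n12 by auto
lemma p1Q: "v \<in> Q2 \<Longrightarrow> p1 v \<in> Q1" using T1.pr_spec Q2P n21 by auto

lemma iso12: assumes "u \<in> Q1" "v \<in> Q1" shows "d (p2 u) (p2 v) = d u v"
proof -
  have "d u (p2 v) = d (p2 u) (p2 v) + 1" using T2.DFX[of u "p2 v"] assms Q1P n12 p2Q by auto
  moreover have "d (p2 v) u = d v u + 1" using T1.DFX[of "p2 v" u] assms Q2P n21 p2Q back1 by auto
  moreover have "d u (p2 v) = d (p2 v) u" using d_sym[of u "p2 v"] assms p2Q by auto
  moreover have "d v u = d u v" using d_sym[of u v] assms by auto
  ultimately show ?thesis by linarith
qed
lemma iso21: assumes "u \<in> Q2" "v \<in> Q2" shows "d (p1 u) (p1 v) = d u v"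
proof -
  have "d u (p1 v) = d (p1 u) (p1 v) + 1" using T1.DFX[of u "p1 v"] assms Q2P n21 p1Q by auto
  moreover have "d (p1 v) u = d v u + 1" using T2.DFX[of "p1 v" u] assms Q1P n12 p1Q back2 by auto
  moreover have "d u (p1 v) = d (p1 v) u" using d_sym[of u "p1 v"] assms p1Q by auto
  moreover have "d v u = d u v" using d_sym[of u v] assms by auto
  ultimately show ?thesis by linarith
qed

definition al where "al z = p1 z"
definition be where "be z = p1 (p2 z)"

lemma FA_le: assumes "z \<in> P" "z \<notin> Q1" "z \<notin> Q2" shows "d (al z) (be z) \<le> 1"
proof -
  have a: "p1 z \<in> Q1" "adj z (p1 z)" using T1.pr_spec assms by auto
  have b: "p2 z \<in> Q2" "adj z (p2 z)" using T2.pr_spec assms by auto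
  have c: "p2 (p1 z) \<in> Q2" "adj (p1 z) (p2 (p1 z))" using T2.pr_spec[of "p1 z"] a Q1P n12 by auto
  have "d z (p2 (p1 z)) \<le> d z (p1 z) + d (p1 z) (p2 (p1 z))" using d_tri[of z "p1 z" "p2 (p1 z)"] a c assms by auto
  then have "d z (p2 (p1 z)) \<le> 2" using a c d1' by auto
  moreover have "d z (p2 (p1 z)) = d (p2 z) (p2 (p1 z)) + 1" using T2.DFX assms c by auto
  ultimately have "d (p2 z) (p2 (p1 z)) \<le> 1" by auto
  then have "d (p1 (p2 z)) (p1 (p2 (p1 z))) \<le> 1" using iso21 b c by auto
  then have "d (p1 (p2 z)) (p1 z) \<le> 1" using back1 a by auto
  then show ?thesis unfolding al_def be_def using d_sym a b p1Q Q1P by (metis subsetD)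
qed

lemma FA: assumes "z \<in> P" "z \<notin> Y" shows "adj (al z) (be z)"
proof -
  have z: "z \<notin> Q1" "z \<notin> Q2" using assms QinY by auto
  have a: "p1 z \<in> Q1" "adj z (p1 z)" using T1.pr_spec assms z by auto
  have b: "p2 z \<in> Q2" "adj z (p2 z)" using T2.pr_spec assms z by auto
  have ne: "al z \<noteq> be z"
  proof
    assume "al z = be z"
    then have "p2 (p1 z) = p2 (p1 (p2 z))" unfolding al_def be_def by simp
    then have e: "p2 (p1 z) = p2 z" using back2 b by simp
    have "adj (p1 z) (p2 (p1 z))" using T2.pr_spec[of "p1 z"] a Q1P n12 by auto
    then have ab: "adj (p1 z) (p2 z)" using e by simp
    obtain l where l: "l \<in> L" "z \<in> l" "p1 z \<in> l" "p2 z \<in> l" using triangle[OF a(2) ab] b by blast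
    have "l \<subseteq> Y" using subsp_line[OF Y_sub l(1,3,4)] adj_neq[OF ab] a b QinY by auto
    then show False using l assms by auto
  qed
  have "d (al z) (be z) \<le> 1" using FA_le assms z by auto
  moreover have "al z \<in> P" "be z \<in> P" using a b p1Q Q1P unfolding al_def be_def by auto
  ultimately show ?thesis using dle1 ne by auto
qed


lemma QPs[simp]: "q \<in> Q \<Longrightarrow> q \<in> P" using T1.QP by auto
lemma QnY[simp]: "q \<in> Q \<Longrightarrow> q \<notin> Y" using QY by auto
lemma QnQ1[simp]: "q \<in> Q \<Longrightarrow> q \<notin> Q1" using QY QinY by auto
lemma QnQ2[simp]: "q \<in> Q \<Longrightarrow> q \<notin> Q2" using QY QinY by auto
lemma Q1nQ: "u \<in> Q1 \<Longrightarrow> u \<notin> Q" using QY QinY by auto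
lemma Q2nQ: "u \<in> Q2 \<Longrightarrow> u \<notin> Q" using QY QinY by auto
lemma Y1[simp]: "u \<in> Q1 \<Longrightarrow> u \<in> Y" using QinY by auto
lemma Y2[simp]: "u \<in> Q2 \<Longrightarrow> u \<in> Y" using QinY by auto

lemma alQ: "z \<in> P \<Longrightarrow> z \<notin> Q1 \<Longrightarrow> al z \<in> Q1 \<and> adj z (al z)"
  using T1.pr_spec unfolding al_def by auto
lemma beQ: "z \<in> P \<Longrightarrow> z \<notin> Q2 \<Longrightarrow> be z \<in> Q1"
  using T2.pr_spec p1Q unfolding be_def by auto
lemma al_inj: "r \<in> Q \<Longrightarrow> r' \<in> Q \<Longrightarrow> al r = al r' \<Longrightarrow> r = r'"
  using T1.inj unfolding al_def by auto
lemma be_inj: assumes "r \<in> Q" "r' \<in> Q" "be r = be r'" shows "r = r'"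
proof -
  have "p2 (be r) = p2 (be r')" using assms by simp
  moreover have "p2 r \<in> Q2" "p2 r' \<in> Q2" using T2.pr_spec assms by auto
  ultimately have "p2 r = p2 r'" using back2 unfolding be_def by metis
  then show ?thesis using T2.inj assms by auto
qed
lemma al_surj: "u \<in> Q1 \<Longrightarrow> \<exists>q\<in>Q. al q = u" using T1.surj unfolding al_def by auto
lemma be_surj: assumes "u \<in> Q1" shows "\<exists>q\<in>Q. be q = u"
proof -
  obtain q where "q \<in> Q" "p2 q = p2 u" using T2.surj p2Q assms by blast
  then have "be q = u" using back1 assms unfolding be_def by auto
  then show ?thesis using \<open>q \<in> Q\<close> by blast
qed
lemma al_contr: "z \<in> P \<Longrightarrow> z \<notin> Q1 \<Longrightarrow> z' \<in> P \<Longrightarrow> z' \<notin> Q1 \<Longrightarrow> d (al z) (al z') \<le> d z z'"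
  using T1.contr unfolding al_def by auto
lemma be_contr: assumes "z \<in> P" "z \<notin> Q2" "z' \<in> P" "z' \<notin> Q2" shows "d (be z) (be z') \<le> d z z'"
proof -
  have "d (p2 z) (p2 z') \<le> d z z'" using T2.contr assms by auto
  moreover have "d (be z) (be z') = d (p2 z) (p2 z')" using iso21 T2.pr_spec assms unfolding be_def by auto
  ultimately show ?thesis by simp
qed

lemma QP1: "q \<in> Q \<Longrightarrow> q \<in> P \<and> q \<notin> Q1 \<and> q \<notin> Q2 \<and> q \<notin> Y" by simp

lemma Q_line: assumes l: "l \<in> L" "r \<in> l" "r' \<in> l" "r \<noteq> r'" "r \<in> Q" "r' \<in> Q" "p \<in> l"
  shows "p \<in> Q"
proof (rule ccontr)
  assume pQ: "p \<notin> Q"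
  have pP: "p \<in> P" using line_sub l by auto
  have pr: "p \<noteq> r" "p \<noteq> r'" using pQ l by blast+
  obtain c0 where c0: "c0 \<in> l" "c0 \<noteq> r" "c0 \<noteq> r'" "l = {r,r',c0}" using line3 l by metis
  have "p = c0" using c0(4) l(7) pr by blast
  then have lz: "l = {r,r',p}" using c0 by simp
  have arr: "adj r r'" "adj r p" "adj r' p" using line_adj l pr by metis+
  have cover: "\<And>q. q \<in> Q \<Longrightarrow> d q r \<le> 1 \<or> d q r' \<le> 1"
  proof -
    fix q assume q: "q \<in> Q"
    have qP: "q \<in> P" using q by simp
    obtain y where y: "y \<in> l" "\<forall>w\<in>l. w \<noteq> y \<longrightarrow> d q w = d q y + 1" using LP[OF qP l(1)] by blast
    have b: "d q r \<le> 2" "d q r' \<le> 2" using qdiam T1.Qq q l by auto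
    have yc: "y = r \<or> y = r' \<or> y = p" using y(1) lz by blast
    show "d q r \<le> 1 \<or> d q r' \<le> 1"
    proof -
      consider "y = r" | "y = r'" | "y = p" using yc by blast
      then show ?thesis
      proof cases
        case 1
        then have "d q r' = d q r + 1" using y(2) l(3,4) by metis
        then show ?thesis using b by linarith
      next
        case 2
        then have "d q r = d q r' + 1" using y(2) l(2,4) by metis
        then show ?thesis using b by linarith
      next
        case 3
        then have e: "d q r = d q p + 1" using y(2) l(2) pr by metis
        have "q \<noteq> p" using q pQ by blast
        then have "d q p \<noteq> 0" using d0 qP pP by blast
        then have e2: "d q p = 1" "d q r = 2" using e b by linarith+
        have "adj q p" using e2 d1 qP pP by blast
        then have "p \<in> Q" using qcommon[OF T1.Qq q l(5) e2(2)] arr(2) adj_sym by blast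
        then show ?thesis using pQ by blast
      qed
    qed
  qed
  show False
  proof (cases "p \<in> Q1")
    case True
    have "al r = p" "al r' = p" using T1.pr_eq[of r p] T1.pr_eq[of r' p] True arr l unfolding al_def by auto
    then show False using al_inj l by auto
  next
    case pQ1: False
    show False
    proof (cases "p \<in> Q2")
      case True
      have "p2 r = p" "p2 r' = p" using T2.pr_eq[of r p] T2.pr_eq[of r' p] True arr l by auto
      then show False using T2.inj l by auto
    next
      case pQ2: False
      have apQ: "al p \<in> Q1" "adj p (al p)" using alQ pP pQ1 by auto
      have p2p: "p2 p \<in> Q2" "adj p (p2 p)" using T2.pr_spec pP pQ2 by auto
      have bpQ: "be p \<in> Q1" using beQ[OF pP pQ2] .
      have key: "\<And>w. w \<in> Q \<Longrightarrow> w \<in> l \<Longrightarrow> adj (al w) (al p) \<and> adj (be w) (be p)"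
      proof
        fix w assume w: "w \<in> Q" "w \<in> l"
        have wp: "w \<noteq> p" using w pQ by auto
        have awp: "adj w p" using line_adj l w wp by auto
        have wQ: "al w \<in> Q1" "adj w (al w)" using alQ w by auto
        have w2: "p2 w \<in> Q2" "adj w (p2 w)" using T2.pr_spec w by auto
        have "d w (al p) \<le> d w p + d p (al p)" using d_tri[of w p "al p"] w pP apQ by auto
        then have "d w (al p) \<le> 2" using awp apQ d1' by auto
        moreover have "d w (al p) = d (al w) (al p) + 1" using T1.DFX[of w "al p"] w apQ unfolding al_def by auto
        ultimately have le1: "d (al w) (al p) \<le> 1" by auto
        have ne1: "al w \<noteq> al p"
        proof
          assume e: "al w = al p"
          have "al w \<in> l" using on_line[OF l(1) w(2) l(7) wp wQ(2)] apQ e adj_sym by auto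
          then show False using lz wQ l pQ1 by auto
        qed
        show "adj (al w) (al p)" using dle1 le1 ne1 wQ apQ by auto
        have "d w (p2 p) \<le> d w p + d p (p2 p)" using d_tri[of w p "p2 p"] w pP p2p by auto
        then have "d w (p2 p) \<le> 2" using awp p2p d1' by auto
        moreover have "d w (p2 p) = d (p2 w) (p2 p) + 1" using T2.DFX[of w "p2 p"] w p2p by auto
        ultimately have "d (p2 w) (p2 p) \<le> 1" by auto
        then have le2: "d (be w) (be p) \<le> 1" using iso21 w2 p2p unfolding be_def by auto
        have ne2: "be w \<noteq> be p"
        proof
          assume "be w = be p"
          then have "p2 (be w) = p2 (be p)" by simp
          then have e: "p2 w = p2 p" using back2 w2 p2p unfolding be_def by auto
          have "p2 w \<in> l" using on_line[OF l(1) w(2) l(7) wp w2(2)] p2p e adj_sym by auto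
          then show False using lz w2 l pQ2 by auto
        qed
        show "adj (be w) (be p)" using dle1 le2 ne2 beQ w bpQ by auto
      qed
      have k: "adj (al r) (al p)" "adj (be r) (be p)" "adj (al r') (al p)" "adj (be r') (be p)"
        using key l by auto
      have arQ: "al r \<in> Q1" "al r' \<in> Q1" "be r \<in> Q1" "be r' \<in> Q1" using alQ beQ l by auto
      have aa: "adj (al r) (al r')"
      proof -
        have "d (al r) (al r') \<le> 1" using al_contr[of r r'] l arr d1' by auto
        moreover have "al r \<noteq> al r'" using al_inj l by auto
        ultimately show ?thesis using dle1 arQ by auto
      qed
      have bb: "adj (be r) (be r')"
      proof -
        have "d (be r) (be r') \<le> 1" using be_contr[of r r'] l arr d1' by auto
        moreover have "be r \<noteq> be r'" using be_inj l by auto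
        ultimately show ?thesis using dle1 arQ by auto
      qed
      have fr: "adj (al r) (be r)" "adj (al r') (be r')" using FA l by auto
      have "d (al p) (be p) \<le> 1" using FA_le pP pQ1 pQ2 by auto
      show False
      proof (cases "al p = be p")
        case False
        then have abp: "adj (al p) (be p)" using dle1 apQ bpQ \<open>d (al p) (be p) \<le> 1\<close> by auto
        have covA: "\<And>t. t \<in> Q1 \<Longrightarrow> d t (al r) \<le> 1 \<or> d t (al r') \<le> 1"
        proof -
          fix t assume "t \<in> Q1"
          then obtain q where q: "q \<in> Q" "al q = t" using al_surj by blast
          have "d t (al r) \<le> d q r" "d t (al r') \<le> d q r'" using al_contr q l by auto
          then show "d t (al r) \<le> 1 \<or> d t (al r') \<le> 1" using cover[OF q(1)] by auto
        qed
        have covB: "\<And>t. t \<in> Q1 \<Longrightarrow> d t (be r) \<le> 1 \<or> d t (be r') \<le> 1"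
        proof -
          fix t assume "t \<in> Q1"
          then obtain q where q: "q \<in> Q" "be q = t" using be_surj by blast
          have "d t (be r) \<le> d q r" "d t (be r') \<le> d q r'" using be_contr q l by auto
          then show "d t (be r) \<le> 1 \<or> d t (be r') \<le> 1" using cover[OF q(1)] by auto
        qed
        obtain Ma where Ma: "Ma \<in> L" "al r \<in> Ma" "al r' \<in> Ma" "al p \<in> Ma"
          using triangle[OF aa k(3)] k(1) by blast
        obtain Mb where Mb: "Mb \<in> L" "be r \<in> Mb" "be r' \<in> Mb" "be p \<in> Mb"
          using triangle[OF bb k(4)] k(2) by blast
        have bpMa: "be p \<in> Ma"
        proof -
          have "d (be p) (al r) \<le> 1 \<or> d (be p) (al r') \<le> 1" using covA bpQ by auto
          then consider "be p = al r" | "be p = al r'" | "adj (be p) (al r)" | "adj (be p) (al r')"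
            using dle1[of "be p" "al r"] dle1[of "be p" "al r'"] bpQ arQ by auto
          then show ?thesis
          proof cases
            case 3 then show ?thesis using on_line[OF Ma(1) Ma(2) Ma(4) adj_neq[OF k(1)] adj_sym[OF 3]] abp by auto
          next
            case 4 then show ?thesis using on_line[OF Ma(1) Ma(3) Ma(4) adj_neq[OF k(3)] adj_sym[OF 4]] abp by auto
          qed (use Ma in auto)
        qed
        have apMb: "al p \<in> Mb"
        proof -
          have "d (al p) (be r) \<le> 1 \<or> d (al p) (be r') \<le> 1" using covB apQ by auto
          then consider "al p = be r" | "al p = be r'" | "adj (al p) (be r)" | "adj (al p) (be r')"
            using dle1[of "al p" "be r"] dle1[of "al p" "be r'"] apQ arQ by auto
          then show ?thesis
          proof cases
            case 3 then show ?thesis using on_line[OF Mb(1) Mb(2) Mb(4) adj_neq[OF k(2)] adj_sym[OF 3]] abp adj_sym by auto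
          next
            case 4 then show ?thesis using on_line[OF Mb(1) Mb(3) Mb(4) adj_neq[OF k(4)] adj_sym[OF 4]] abp adj_sym by auto
          qed (use Mb in auto)
        qed
        have MM: "Ma = Mb" using line_unique[OF False Ma(1) Mb(1) Ma(4) bpMa apMb Mb(4)] .
        obtain c where c: "c \<in> Ma" "c \<noteq> al p" "c \<noteq> be p" "Ma = {al p, be p, c}"
          using line3[OF Ma(1) Ma(4) bpMa False] by blast
        have cQ: "c \<in> Q1" using T1.X_sub[OF Ma(1) Ma(4) bpMa False apQ(1) bpQ] c by auto
        have inA: "al r \<in> {be p, c}" "al r' \<in> {be p, c}" using Ma c k adj_neq by auto
        have inB: "be r \<in> {al p, c}" "be r' \<in> {al p, c}" using Mb MM c k adj_neq by auto
        obtain t where t: "t \<in> Q1" "d c t = 2" using qfar T1.Xq cQ by blast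
        have tc: "d t c = 2" using t d_sym cQ by auto
        have tM: "t \<notin> Ma"
        proof
          assume "t \<in> Ma"
          moreover have "t \<noteq> c" using t by auto
          ultimately have "adj c t" using line_adj Ma c by auto
          then show False using d1' t by auto
        qed
        have t1: "d t (be p) \<le> 1" using covA[OF t(1)] inA tc by auto
        have t2: "d t (al p) \<le> 1" using covB[OF t(1)] inB tc by auto
        have "t \<noteq> be p" "t \<noteq> al p" using tM Ma bpMa by auto
        then have "adj t (be p)" "adj t (al p)" using dle1 t1 t2 t bpQ apQ by auto
        then have "t \<in> Ma" using on_line[OF Ma(1) Ma(4) bpMa False] adj_sym by auto
        then show False using tM by auto
      next
        case True
        define s where "s = al p"
        have sb: "be p = s" using True s_def by simp
        have ks: "adj (al r) s" "adj (be r) s" "adj (al r') s" "adj (be r') s" using k s_def sb by auto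
        obtain lr where lr: "lr \<in> L" "al r \<in> lr" "be r \<in> lr" "s \<in> lr" using triangle[OF fr(1) ks(2)] ks(1) by blast
        have lr3: "lr = {al r, be r, s}"
        proof -
          obtain c where "c \<in> lr" "c \<noteq> al r" "c \<noteq> be r" "lr = {al r, be r, c}" using line3 lr adj_neq[OF fr(1)] by metis
          then show ?thesis using lr ks adj_neq by auto
        qed
        have ar'l: "al r' \<in> lr" using on_line[OF lr(1) lr(2) lr(4) adj_neq[OF ks(1)] aa] ks(3) adj_sym by auto
        have br'l: "be r' \<in> lr" using on_line[OF lr(1) ar'l lr(4) adj_neq[OF ks(3)] fr(2)] ks(4) adj_sym by auto
        have e1: "al r' = be r" using ar'l lr3 al_inj l ks adj_neq by auto
        have n1: "be r' \<noteq> be r" using fr(2) e1 adj_neq by metis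
        have n2: "be r' \<noteq> s" using ks(4) adj_neq by metis
        have e2: "be r' = al r" using br'l lr3 n1 n2 by auto
        obtain q0 where q0: "q0 \<in> Q" "al q0 = s" using al_surj apQ s_def by blast
        have q0r: "q0 \<noteq> r" "q0 \<noteq> r'" using q0 ks adj_neq by auto
        have fq: "adj s (be q0)" using FA q0 by auto
        have bq0: "be q0 \<in> Q1" using beQ q0 by auto
        have "d q0 r \<le> 1 \<or> d q0 r' \<le> 1" using cover q0 by auto
        then consider "adj q0 r" | "adj q0 r'" using dle1 q0 q0r l by auto
        then show False
        proof cases
          case 1
          have "d (be q0) (be r) \<le> 1" using be_contr[of q0 r] q0 l 1 d1' by auto
          moreover have "be q0 \<noteq> be r" using be_inj q0 l q0r by auto
          ultimately have "adj (be q0) (be r)" using dle1 bq0 arQ by auto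
          then have "be q0 \<in> lr" using on_line[OF lr(1) lr(3) lr(4) adj_neq[OF ks(2)]] fq adj_sym by auto
          then have "be q0 = al r" using lr3 \<open>be q0 \<noteq> be r\<close> fq adj_neq by auto
          then have "q0 = r'" using e2 be_inj q0 l by auto
          then show False using q0r by auto
        next
          case 2
          have "d (be q0) (be r') \<le> 1" using be_contr[of q0 r'] q0 l 2 d1' by auto
          moreover have "be q0 \<noteq> be r'" using be_inj q0 l q0r by auto
          ultimately have "adj (be q0) (be r')" using dle1 bq0 arQ by auto
          then have "be q0 \<in> lr" using on_line[OF lr(1) br'l lr(4) adj_neq[OF ks(4)]] fq adj_sym by auto
          then have "be q0 = be r" using lr3 \<open>be q0 \<noteq> be r'\<close> fq adj_neq e2 by auto
          then have "q0 = r" using be_inj q0 l by auto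
          then show False using q0r by auto
        qed
      qed
    qed
  qed
qed


lemma Q_uniq: assumes z: "z \<in> P" "z \<notin> Q" and q: "q1 \<in> Q" "q2 \<in> Q" "adj z q1" "adj z q2"
  shows "q1 = q2"
proof (rule ccontr)
  assume ne: "q1 \<noteq> q2"
  show False
  proof (cases "adj q1 q2")
    case True
    then obtain l where l: "l \<in> L" "z \<in> l" "q1 \<in> l" "q2 \<in> l" using triangle q adj_sym by metis
    then have "z \<in> Q" using Q_line[OF l(1,3,4) ne q(1,2) l(2)] by simp
    then show False using z by simp
  next
    case False
    then have "d q1 q2 = 2" using qnadj[OF T1.Qq q(1,2) ne] by simp
    moreover have "d q1 z = 1" "d z q2 = 1" using q d1' adj_sym by auto
    ultimately have "z \<in> Q" using qconv[OF T1.Qq q(1,2) z(1)] by auto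
    then show False using z by simp
  qed
qed

lemma DFQ: assumes "z \<in> P" "z \<notin> Q" "r \<in> Q" "adj z r" "q \<in> Q" shows "d z q = d r q + 1"
  using DF[OF T1.Qq assms(1-4) _ assms(5)] Q_uniq[OF assms(1,2)] assms(3,4) by blast

lemma al_iso: assumes "q \<in> Q" "q' \<in> Q" shows "d (al q) (al q') = d q q'"
proof -
  have a: "al q' \<in> Q1" "adj q' (al q')" "al q \<in> Q1" using alQ assms by auto
  have "al q' \<notin> Q" using a by auto
  then have "d (al q') q = d q' q + 1" using DFQ[of "al q'" q' q] a assms adj_sym by auto
  moreover have "d q (al q') = d (al q) (al q') + 1" using T1.DFX[of q "al q'"] a assms unfolding al_def by auto
  moreover have "d q (al q') = d (al q') q" using d_sym[of q "al q'"] a assms by auto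
  moreover have "d q' q = d q q'" using d_sym[of q q'] assms by auto
  ultimately show ?thesis by linarith
qed

lemma be_iso: assumes "q \<in> Q" "q' \<in> Q" shows "d (be q) (be q') = d q q'"
proof -
  have a: "p2 q' \<in> Q2" "adj q' (p2 q')" "p2 q \<in> Q2" using T2.pr_spec assms by auto
  have "p2 q' \<notin> Q" using a by auto
  then have "d (p2 q') q = d q' q + 1" using DFQ[of "p2 q'" q' q] a assms adj_sym by auto
  moreover have "d q (p2 q') = d (p2 q) (p2 q') + 1" using T2.DFX[of q "p2 q'"] a assms by auto
  moreover have "d q (p2 q') = d (p2 q') q" using d_sym[of q "p2 q'"] a assms by auto
  moreover have "d q' q = d q q'" using d_sym[of q q'] assms by auto
  ultimately have "d (p2 q) (p2 q') = d q q'" by linarith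
  then show ?thesis using iso21 a unfolding be_def by auto
qed

lemma main: assumes xy: "x \<in> Q" "y \<in> Q" "x \<noteq> y" "\<not> collinear L x y"
  shows "(d (p2 (p1 x)) (p1 (p2 y)), d (p1 (p2 x)) (p2 (p1 y))) \<in> {(2, 3), (3, 2)}"
proof -
  have dxy: "d x y = 2" using qnadj[OF T1.Qq xy(1,2,3)] xy(4) adj_def by auto
  have xP: "x \<in> P" "y \<in> P" using xy by auto
  define ax where "ax = al x"
  define bx where "bx = be x"
  define ay where "ay = al y"
  define by' where "by' = be y"
  have Q1s: "ax \<in> Q1" "bx \<in> Q1" "ay \<in> Q1" "by' \<in> Q1" using alQ beQ xy unfolding ax_def bx_def ay_def by'_def by auto
  have adjx: "adj x ax" "adj y ay" using alQ xy unfolding ax_def ay_def by auto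
  have p2s: "p2 ax \<in> Q2" "p2 ay \<in> Q2" using p2Q Q1s by auto
  have D1: "d (p2 (p1 x)) (p1 (p2 y)) = d ax by' + 1"
    using T1.DFX[of "p2 ax" by'] p2s Q1s back1 unfolding ax_def al_def by'_def be_def by auto
  have D2: "d (p1 (p2 x)) (p2 (p1 y)) = d ay bx + 1"
  proof -
    have "d (p2 ay) bx = d ay bx + 1" using T1.DFX[of "p2 ay" bx] p2s Q1s back1 by auto
    moreover have "d bx (p2 ay) = d (p2 ay) bx" using d_sym[of bx "p2 ay"] p2s Q1s by auto
    ultimately show ?thesis unfolding bx_def be_def ay_def al_def by simp
  qed
  have far: "\<And>u v. u \<in> Q \<Longrightarrow> v \<in> Q \<Longrightarrow> d u v = 2 \<Longrightarrow> al u \<noteq> be v"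
  proof
    fix u v assume uv: "u \<in> Q" "v \<in> Q" "d u v = 2" "al u = be v"
    have au: "al u \<in> Q1" "adj u (al u)" using alQ[of u] uv(1) by auto
    have v2: "p2 v \<in> Q2" "adj v (p2 v)" using T2.pr_spec uv by auto
    have "p2 (al u) = p2 v" using uv back2 v2 unfolding be_def by auto
    moreover have "adj (al u) (p2 (al u))" using T2.pr_spec[of "al u"] au by auto
    ultimately have "adj (al u) (p2 v)" by simp
    then have "d u (p2 v) \<le> 2" using d_tri[of u "al u" "p2 v"] au v2 uv d1' by auto
    moreover have "d (p2 v) u = d v u + 1" using DFQ[of "p2 v" v u] v2 uv adj_sym[OF v2(2)] Q2nQ[OF v2(1)] by auto
    moreover have "d (p2 v) u = d u (p2 v)" using d_sym[of u "p2 v"] v2 uv by auto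
    moreover have "d v u = 2" using uv d_sym[of u v] by auto
    ultimately show False by linarith
  qed
  have a0: "ax \<noteq> by'" using far[of x y] xy dxy unfolding ax_def by'_def by auto
  have b0: "ay \<noteq> bx" using far[of y x] xy dxy d_sym[of x y] unfolding ay_def bx_def by auto
  have "d ax by' \<noteq> 0" using a0 d0[of ax by'] Q1s by auto
  then have a12: "d ax by' \<ge> 1" "d ax by' \<le> 2" using Q1s qdiam[OF T1.Xq] by auto
  have "d ay bx \<noteq> 0" using b0 d0[of ay bx] Q1s by auto
  then have b12: "d ay bx \<ge> 1" "d ay bx \<le> 2" using Q1s qdiam[OF T1.Xq] by auto
  have aa: "d ax ay = 2" using al_iso xy dxy unfolding ax_def ay_def by auto
  have bb: "d bx by' = 2" using be_iso xy dxy unfolding bx_def by'_def by auto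
  have fx: "adj ax bx" using FA xy unfolding ax_def bx_def by auto
  obtain lx where lx: "lx \<in> L" "ax \<in> lx" "bx \<in> lx" using adj_line fx by blast
  obtain g where g: "g \<in> lx" "g \<noteq> ax" "g \<noteq> bx" "lx = {ax, bx, g}" using line3 lx adj_neq fx by metis
  have gQ: "g \<in> Q1" using T1.X_sub[OF lx(1,2,3) adj_neq[OF fx] Q1s(1,2)] g by auto
  have agx: "adj ax g" "adj bx g" using line_adj lx g by auto
  have tg: "p2 g \<in> Q2" "adj g (p2 g)" using T2.pr_spec[of g] gQ by auto
  obtain lm where lm: "lm \<in> L" "g \<in> lm" "p2 g \<in> lm" using adj_line tg by blast
  obtain m where m: "m \<in> lm" "m \<noteq> g" "m \<noteq> p2 g" "lm = {g, p2 g, m}" using line3 lm adj_neq tg by metis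
  have mY: "m \<in> Y" using subsp_line[OF Y_sub lm(1,2,3) adj_neq[OF tg(2)]] gQ tg m by auto
  have mP: "m \<in> P" using line_sub lm m by auto
  have mQ: "m \<notin> Q" using mY QY by auto
  have dist_g: "\<And>z. z \<in> Q \<Longrightarrow> d z g = d (al z) g + 1 \<and> d z (p2 g) = d (be z) g + 1"
  proof
    fix z assume z: "z \<in> Q"
    show "d z g = d (al z) g + 1" using T1.DFX[of z g] z gQ unfolding al_def by auto
    have "d z (p2 g) = d (p2 z) (p2 g) + 1" using T2.DFX[of z "p2 g"] z tg by auto
    moreover have "d (p1 (p2 z)) (p1 (p2 g)) = d (p2 z) (p2 g)" using iso21 T2.pr_spec[of z] z tg by auto
    ultimately show "d z (p2 g) = d (be z) g + 1" using back1 gQ unfolding be_def by auto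
  qed
  have xg: "d x g = 2" "d x (p2 g) = 2" using dist_g[OF xy(1)] agx d1' unfolding ax_def bx_def by auto
  have xm: "adj x m"
  proof -
    obtain y0 where y0: "y0 \<in> lm" "\<forall>w\<in>lm. w \<noteq> y0 \<longrightarrow> d x w = d x y0 + 1" using LP[OF xP(1) lm(1)] by blast
    have "y0 = g \<or> y0 = p2 g \<or> y0 = m" using y0 m by auto
    moreover have "y0 \<noteq> g" using y0 xg lm adj_neq tg by force
    moreover have "y0 \<noteq> p2 g" using y0 xg lm adj_neq tg by force
    ultimately have "y0 = m" by blast
    then have "d x m = 1" using y0 xg lm m by force
    then show ?thesis using d1 xP mP by auto
  qed
  have ym: "d y m = 3"
  proof -
    have "d m y = d x y + 1" using DFQ[of m x y] mP mQ xm adj_sym xy by auto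
    then show ?thesis using d_sym[of y m] xP mP dxy by auto
  qed
  have K: "(d ay g = 1 \<and> d by' g = 2) \<or> (d ay g = 2 \<and> d by' g = 1)"
  proof -
    have yg: "d y g = d ay g + 1" "d y (p2 g) = d by' g + 1" using dist_g[OF xy(2)] unfolding ay_def by'_def by auto
    have le: "d ay g \<le> 2" "d by' g \<le> 2" using qdiam[OF T1.Xq] Q1s gQ by auto
    obtain y0 where y0: "y0 \<in> lm" "\<forall>w\<in>lm. w \<noteq> y0 \<longrightarrow> d y w = d y y0 + 1" using LP[OF xP(2) lm(1)] by blast
    have c: "y0 = g \<or> y0 = p2 g \<or> y0 = m" using y0 m by auto
    have "y0 \<noteq> m"
    proof
      assume "y0 = m"
      then have "d y g = 4" using y0 ym m lm by force
      then show False using yg le by auto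
    qed
    then have "y0 = g \<or> y0 = p2 g" using c by auto
    then show ?thesis
    proof
      assume e: "y0 = g"
      have gt: "p2 g \<noteq> g" using adj_neq[OF tg(2)] by metis
      have "d y m = d y g + 1" using y0(2) m(1,2) e by auto
      moreover have "d y (p2 g) = d y g + 1" using y0(2) lm(3) gt e by auto
      ultimately show ?thesis using yg ym by auto
    next
      assume e: "y0 = p2 g"
      have gt: "p2 g \<noteq> g" using adj_neq[OF tg(2)] by metis
      have "d y m = d y (p2 g) + 1" using y0(2) m(1,3) e by auto
      moreover have "d y g = d y (p2 g) + 1" using y0(2) lm(2) gt e by auto
      ultimately show ?thesis using yg ym by auto
    qed
  qed
  have notall: "\<And>u. u \<in> Q1 \<Longrightarrow> d u ax = 2 \<Longrightarrow> d u bx = 2 \<Longrightarrow> d u g = 2 \<Longrightarrow> False"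
  proof -
    fix u assume u: "u \<in> Q1" "d u ax = 2" "d u bx = 2" "d u g = 2"
    obtain y0 where y0: "y0 \<in> lx" "\<forall>w\<in>lx. w \<noteq> y0 \<longrightarrow> d u w = d u y0 + 1" using LP[OF _ lx(1), of u] u by auto
    have "y0 = ax \<or> y0 = bx \<or> y0 = g" using y0 g by auto
    then show False using y0 u g lx by force
  qed
  have ab: "(d ax by' = 1 \<and> d ay bx = 2) \<or> (d ax by' = 2 \<and> d ay bx = 1)"
  proof -
    have c1: "\<not> (d ax by' = 1 \<and> d ay bx = 1)"
    proof
      assume h: "d ax by' = 1 \<and> d ay bx = 1"
      have ayl: "ay \<notin> lx"
      proof
        assume "ay \<in> lx"
        moreover have "ay \<noteq> ax" using aa by auto
        moreover have "ay \<noteq> g" using K by auto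
        ultimately show False using g b0 by auto
      qed
      have byl: "by' \<notin> lx"
      proof
        assume "by' \<in> lx"
        moreover have "by' \<noteq> bx" using bb by auto
        moreover have "by' \<noteq> g" using K by auto
        ultimately show False using g a0 by auto
      qed
      have "adj ay bx" using h d1 Q1s by auto
      then have n1: "\<not> adj ay g" using on_line[OF lx(1) lx(3) g(1) g(3)[symmetric]] ayl adj_sym by blast
      have "adj by' ax" using h d1 Q1s d_sym[of ax by'] by auto
      then have n2: "\<not> adj by' g" using on_line[OF lx(1) lx(2) g(1) g(2)[symmetric]] byl adj_sym by blast
      have "d ay g \<noteq> 1" "d by' g \<noteq> 1" using n1 n2 d1 Q1s gQ by auto
      then show False using K by auto
    qed
    have c2: "\<not> (d ax by' = 2 \<and> d ay bx = 2)"
    proof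
      assume h: "d ax by' = 2 \<and> d ay bx = 2"
      show False
      proof (cases "d ay g = 2")
        case True
        have "d ay ax = 2" using aa d_sym[of ax ay] Q1s by auto
        then show False using notall[OF Q1s(3)] h True by auto
      next
        case False
        then have "d by' g = 2" using K by auto
        moreover have "d by' ax = 2" using h d_sym[of ax by'] Q1s by auto
        moreover have "d by' bx = 2" using bb d_sym[of bx by'] Q1s by auto
        ultimately show False using notall[OF Q1s(4)] by auto
      qed
    qed
    show ?thesis using a12 b12 c1 c2 by auto
  qed
  show ?thesis using D1 D2 ab by auto
qed

end

theorem proposition2p6:
  fixes P :: "'a set" and L :: "'a set set" and Q1 Q2 Q :: "'a set" and x y :: 'a
  assumes "slim L" and "dense_nh P L"
    and "big_quad P L Q1" and "big_quad P L Q2" and "Q1 \<inter> Q2 = {}"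
    and "big_quad P L Q" and "Q \<inter> generated_subspace P L (Q1 \<union> Q2) = {}"
    and "x \<in> Q" and "y \<in> Q" and "x \<noteq> y" and "\<not> collinear L x y"
  shows "(pdist L (proj_pt L Q2 (proj_pt L Q1 x)) (proj_pt L Q1 (proj_pt L Q2 y)),
          pdist L (proj_pt L Q1 (proj_pt L Q2 x)) (proj_pt L Q2 (proj_pt L Q1 y)))
         \<in> {(2, 3), (3, 2)}"
proof -
  interpret cfg P L Q1 Q2 Q
    by unfold_locales (use assms in auto)
  show ?thesis using main[OF assms(8-11)] .
qed

end
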